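(* Let $\mathcal{S}_1,\dots,\mathcal{S}_L$ be finitely many finite subsets of $\mathbb{C}$, each having non-zero coordinate product distance. For $\theta\in[0,2\pi]$ and $x=(x^1,\dots,x^6)\in\mathbb{C}^6$, let $X'_\theta(x)$ be the $3\times 4$ matrix $$X'_\theta(x)=\begin{bmatrix} x^{1R}+jx^{3I} & -x^{2R}+jx^{4I} & e^{j\theta}(x^{5R}+jx^{6I}) & e^{j\theta}(-x^{3R}+jx^{1I})\\ x^{2R}+jx^{4I} & x^{1R}-jx^{3I} & e^{j\theta}(x^{4R}+jx^{2I}) & e^{j\theta}(x^{5R}-jx^{6I})\\ e^{j\theta}(x^{6R}+jx^{5I}) & e^{j\theta}(-x^{6R}+jx^{5I}) & x^{3R}+jx^{1I} & -x^{4R}+jx^{2I} \end{bmatrix}.$$ Then there exists $\theta\in[0,2\pi]$ such that for every $\ell\in\{1,\dots,L\}$ and every two distinct tuples $x\neq y$ in $\mathcal{S}_\ell^6$, the difference matrix $X'_\theta(x)-X'_\theta(y)$ has rank $3$.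
   Context: For a complex number $a$, $a^R$ and $a^I$ denote its real and imaginary parts, and $j=\sqrt{-1}$. The coordinate product distance (CPD) between two distinct points $u,v$ of a finite set $\mathcal{S}\subset\mathbb{C}$ is $|u^R-v^R|\,|u^I-v^I|$; the CPD of $\mathcal{S}$ is the minimum of this quantity over all pairs of distinct points of $\mathcal{S}$. (So non-zero CPD means any two distinct points differ in both real and imaginary parts.) *)

theory Defs
  imports "HOL-Analysis.Analysis"
begin

text \<open>Non-zero coordinate product distance: every pair of distinct points u, v of S
  has |Re u - Re v| * |Im u - Im v| non-zero (the minimum over the finitely many
  pairs is non-zero).\<close>
definition nonzero_cpd :: "complex set \<Rightarrow> bool" where
  "nonzero_cpd S \<longleftrightarrow>
     (\<forall>u\<in>S. \<forall>v\<in>S. u \<noteq> v \<longrightarrow> \<bar>Re u - Re v\<bar> * \<bar>Im u - Im v\<bar> \<noteq> 0)"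

text \<open>The 3x4 matrix X'_theta(x) for x = (x^1,...,x^6) in C^6.
  Components are indexed by the numeral type 6; the component x^6 is x$6 (= x$0 in type 6).\<close>
definition Xp :: "real \<Rightarrow> complex^6 \<Rightarrow> complex^4^3" where
  "Xp \<theta> x = (let e = exp (\<i> * complex_of_real \<theta>);
      c = (\<lambda>a b. Complex a b) in
     vector [
       vector [c (Re (x$1)) (Im (x$3)), c (- Re (x$2)) (Im (x$4)),
               e * c (Re (x$5)) (Im (x$6)), e * c (- Re (x$3)) (Im (x$1))],
       vector [c (Re (x$2)) (Im (x$4)), c (Re (x$1)) (- Im (x$3)),
               e * c (Re (x$4)) (Im (x$2)), e * c (Re (x$5)) (- Im (x$6))],
       vector [e * c (Re (x$6)) (Im (x$5)), e * c (- Re (x$6)) (Im (x$5)),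
               c (Re (x$3)) (Im (x$1)), c (- Re (x$4)) (Im (x$2))]])"

end

theory Submission imports Defs begin

lemma exhaust_6:
  fixes x :: 6
  shows "x = 1 \<or> x = 2 \<or> x = 3 \<or> x = 4 \<or> x = 5 \<or> x = 6"
proof (induct x)
  case (of_int z)
  then have "z = 0 \<or> z = 1 \<or> z = 2 \<or> z = 3 \<or> z = 4 \<or> z = 5" by fastforce
  then show ?case by auto
qed

lemma Xp_ent:
  fixes t :: real defines "e \<equiv> exp (\<i> * complex_of_real t)"
  shows
  "Xp t x $1$1 = Complex (Re (x$1)) (Im (x$3))"
  "Xp t x $1$2 = Complex (- Re (x$2)) (Im (x$4))"
  "Xp t x $1$3 = e * Complex (Re (x$5)) (Im (x$6))"
  "Xp t x $1$4 = e * Complex (- Re (x$3)) (Im (x$1))"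
  "Xp t x $2$1 = Complex (Re (x$2)) (Im (x$4))"
  "Xp t x $2$2 = Complex (Re (x$1)) (- Im (x$3))"
  "Xp t x $2$3 = e * Complex (Re (x$4)) (Im (x$2))"
  "Xp t x $2$4 = e * Complex (Re (x$5)) (- Im (x$6))"
  "Xp t x $3$1 = e * Complex (Re (x$6)) (Im (x$5))"
  "Xp t x $3$2 = e * Complex (- Re (x$6)) (Im (x$5))"
  "Xp t x $3$3 = Complex (Re (x$3)) (Im (x$1))"
  "Xp t x $3$4 = Complex (- Re (x$4)) (Im (x$2))"
  by (simp_all add: Xp_def Let_def vector_def e_def)

lemma Xp_diff: "Xp t x - Xp t y = Xp t (x - y)"
  by (simp add: vec_eq_iff forall_3 forall_4 Xp_ent complex_eq_iff algebra_simps)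

definition det3 :: "complex \<Rightarrow> complex \<Rightarrow> complex \<Rightarrow> complex \<Rightarrow> complex \<Rightarrow> complex \<Rightarrow> complex \<Rightarrow> complex \<Rightarrow> complex \<Rightarrow> complex" where
  "det3 m11 m12 m13 m21 m22 m23 m31 m32 m33 = m11*m22*m33 + m12*m23*m31 + m13*m21*m32 - m13*m22*m31 - m12*m21*m33 - m11*m23*m32"

lemma det3_gen: "det3 m11 m12 (e*u) m21 m22 (e * v) (e*w) (e*z) c
   = c*(m11*m22 - m12*m21) + e^2*(m12 * v * w + u*m21*z - u*m22*w - m11 * v * z)"
  by (simp add: det3_def algebra_simps power2_eq_square)

lemma N_eq: "Complex a b * Complex a (-b) - Complex (-c) d * Complex c d = Complex (a^2+b^2+c^2+d^2) 0"
  by (simp add: complex_eq_iff power2_eq_square algebra_simps)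

lemma C00: "Complex 0 0 = 0" by (simp add: complex_eq_iff)

lemma finite_lin: "(a::complex) \<noteq> 0 \<Longrightarrow> finite {w. a + w*k = 0}"
proof -
  assume a: "a \<noteq> 0"
  have "{w. a + w*k = 0} \<subseteq> {-a/k}"
  proof
    fix w assume "w \<in> {w. a + w*k = 0}"
    then have h: "a + w*k = 0" by simp
    then have "k \<noteq> 0" using a by auto
    with h show "w \<in> {-a/k}" by (simp add: field_simps add_eq_0_iff2)
  qed
  then show ?thesis by (rule finite_subset) simp
qed

lemma det123: "det3 (Xp t d$1$1) (Xp t d$1$2) (Xp t d$1$3) (Xp t d$2$1) (Xp t d$2$2) (Xp t d$2$3) (Xp t d$3$1) (Xp t d$3$2) (Xp t d$3$3)
  = Complex (Re (d$3)) (Im (d$1)) * Complex ((Re (d$1))^2 + (Im (d$3))^2 + (Re (d$2))^2 + (Im (d$4))^2) 0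
    + (exp (\<i> * complex_of_real t))^2 * (Xp 0 d$1$2 * Xp 0 d$2$3 * Xp 0 d$3$1 + Xp 0 d$1$3 * Xp 0 d$2$1 * Xp 0 d$3$2
      - Xp 0 d$1$3 * Xp 0 d$2$2 * Xp 0 d$3$1 - Xp 0 d$1$1 * Xp 0 d$2$3 * Xp 0 d$3$2)"
  unfolding Xp_ent det3_gen N_eq by simp

lemma det124: "det3 (Xp t d$1$1) (Xp t d$1$2) (Xp t d$1$4) (Xp t d$2$1) (Xp t d$2$2) (Xp t d$2$4) (Xp t d$3$1) (Xp t d$3$2) (Xp t d$3$4)
  = Complex (- Re (d$4)) (Im (d$2)) * Complex ((Re (d$1))^2 + (Im (d$3))^2 + (Re (d$2))^2 + (Im (d$4))^2) 0
    + (exp (\<i> * complex_of_real t))^2 * (Xp 0 d$1$2 * Xp 0 d$2$4 * Xp 0 d$3$1 + Xp 0 d$1$4 * Xp 0 d$2$1 * Xp 0 d$3$2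
      - Xp 0 d$1$4 * Xp 0 d$2$2 * Xp 0 d$3$1 - Xp 0 d$1$1 * Xp 0 d$2$4 * Xp 0 d$3$2)"
  unfolding Xp_ent det3_gen N_eq by simp

lemma rank3:
  fixes A :: "complex^4^3"
  assumes H: "\<And>c1 c2 c3. c1 *s A$1 + c2 *s A$2 + c3 *s A$3 = 0 \<Longrightarrow> c1=0 \<and> c2=0 \<and> c3=0"
  shows "rank A = 3"
proof -
  have rows: "rows A = {A$1, A$2, A$3}"
    unfolding rows_def row_def apply (auto simp: vec_lambda_eta) by (metis exhaust_3)
  have d12: "A$1 \<noteq> A$2" using H[of 1 "-1" 0] by auto
  have d13: "A$1 \<noteq> A$3" using H[of 1 0 "-1"] by auto
  have d23: "A$2 \<noteq> A$3" using H[of 0 1 "-1"] by auto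
  have ind: "\<not> vec.dependent {A$1, A$2, A$3}"
  proof
    assume "vec.dependent {A$1, A$2, A$3}"
    then obtain u where u: "\<exists>v\<in>{A$1, A$2, A$3}. u v \<noteq> 0"
      "(\<Sum>v\<in>{A$1, A$2, A$3}. u v *s v) = 0"
      by (subst (asm) vec.dependent_finite) auto
    then have "u (A$1) *s A$1 + u (A$2) *s A$2 + u (A$3) *s A$3 = 0"
      using d12 d13 d23 by (simp add: add.assoc)
    from H[OF this] u(1) show False by auto
  qed
  have "vec.dim (rows A) = card {A$1, A$2, A$3}"
    unfolding rows by (rule vec.dim_eq_card_independent[OF ind])
  also have "\<dots> = 3" using d12 d13 d23 by simp
  finally show ?thesis by (simp add: row_rank_def_gen)
qed

lemma sys3:
  fixes c1 c2 c3 :: complex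
  assumes "c1*m11 + c2*m21 + c3*m31 = 0" "c1*m12 + c2*m22 + c3*m32 = 0" "c1*m13 + c2*m23 + c3*m33 = 0"
    "det3 m11 m12 m13 m21 m22 m23 m31 m32 m33 \<noteq> 0"
  shows "c1 = 0 \<and> c2 = 0 \<and> c3 = 0"
proof -
  have "c1 * det3 m11 m12 m13 m21 m22 m23 m31 m32 m33 = 0"
       "c2 * det3 m11 m12 m13 m21 m22 m23 m31 m32 m33 = 0"
       "c3 * det3 m11 m12 m13 m21 m22 m23 m31 m32 m33 = 0"
    using assms(1-3) unfolding det3_def by algebra+
  with assms(4) show ?thesis by simp
qed

lemma rank_minor:
  fixes A :: "complex^4^3"
  assumes "det3 (A$1$j1) (A$1$j2) (A$1$j3) (A$2$j1) (A$2$j2) (A$2$j3) (A$3$j1) (A$3$j2) (A$3$j3) \<noteq> 0"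
  shows "rank A = 3"
proof (rule rank3)
  fix c1 c2 c3 :: complex
  assume "c1 *s A$1 + c2 *s A$2 + c3 *s A$3 = 0"
  then have "\<And>j. c1 * A$1$j + c2 * A$2$j + c3 * A$3$j = 0"
    by (metis (no_types, lifting) vector_add_component vector_smult_component zero_index)
  from this[of j1] this[of j2] this[of j3] assms show "c1=0 \<and> c2=0 \<and> c3=0"
    by (rule sys3)
qed

lemma core:
  fixes d :: "complex^6"
  assumes d0: "d \<noteq> 0" and P: "\<forall>i. Re (d$i) = 0 \<longleftrightarrow> Im (d$i) = 0"
  shows "\<exists>W. finite W \<and> (\<forall>t. (exp (\<i> * complex_of_real t))^2 \<notin> W \<longrightarrow> rank (Xp t d) = 3)"
proof (cases "d$1 = 0 \<and> d$2 = 0 \<and> d$3 = 0 \<and> d$4 = 0")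
  case True
  have "d$5 \<noteq> 0 \<or> d$6 \<noteq> 0"
  proof (rule ccontr)
    assume "\<not> ?thesis"
    with True have "\<forall>i. d$i = 0" by (metis exhaust_6)
    with d0 show False by (simp add: vec_eq_iff)
  qed
  then have nz: "Re (d$5) \<noteq> 0 \<or> Im (d$6) \<noteq> 0" "Re (d$6) \<noteq> 0 \<or> Im (d$5) \<noteq> 0"
    using P by (auto simp: complex_eq_iff)
  have "rank (Xp t d) = 3" for t
  proof (rule rank_minor[of _ 1 3 4])
    show "det3 (Xp t d$1$1) (Xp t d$1$3) (Xp t d$1$4) (Xp t d$2$1) (Xp t d$2$3) (Xp t d$2$4) (Xp t d$3$1) (Xp t d$3$3) (Xp t d$3$4) \<noteq> 0"
    proof -
      let ?e = "exp (\<i> * complex_of_real t)"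
      have "det3 (Xp t d$1$1) (Xp t d$1$3) (Xp t d$1$4) (Xp t d$2$1) (Xp t d$2$3) (Xp t d$2$4) (Xp t d$3$1) (Xp t d$3$3) (Xp t d$3$4)
        = (?e * Complex (Re (d$5)) (Im (d$6))) * (?e * Complex (Re (d$5)) (- Im (d$6))) * (?e * Complex (Re (d$6)) (Im (d$5)))"
        using True unfolding Xp_ent det3_def by (simp add: C00)
      moreover have "Complex (Re (d$5)) (Im (d$6)) \<noteq> 0" "Complex (Re (d$5)) (- Im (d$6)) \<noteq> 0"
        "Complex (Re (d$6)) (Im (d$5)) \<noteq> 0"
        using nz by (auto simp: complex_eq_iff)
      ultimately show ?thesis by simp
    qed
  qed
  then show ?thesis by blast
next
  case False
  let ?N = "Complex ((Re (d$1))^2 + (Im (d$3))^2 + (Re (d$2))^2 + (Im (d$4))^2) 0"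
  have P1: "Re (d$1) = 0 \<longleftrightarrow> Im (d$1) = 0" "Re (d$2) = 0 \<longleftrightarrow> Im (d$2) = 0"
    "Re (d$3) = 0 \<longleftrightarrow> Im (d$3) = 0" "Re (d$4) = 0 \<longleftrightarrow> Im (d$4) = 0"
    using P by blast+
  have h: "Re (d$1) \<noteq> 0 \<or> Im (d$3) \<noteq> 0 \<or> Re (d$2) \<noteq> 0 \<or> Im (d$4) \<noteq> 0"
    using False P1 by (auto simp: complex_eq_iff)
  have "0 < (Re (d$1))^2 + (Im (d$3))^2 + (Re (d$2))^2 + (Im (d$4))^2"
    using h zero_le_power2[of "Re (d$1)"] zero_le_power2[of "Im (d$3)"] zero_le_power2[of "Re (d$2)"]
      zero_le_power2[of "Im (d$4)"] zero_less_power2[of "Re (d$1)"] zero_less_power2[of "Im (d$3)"]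
      zero_less_power2[of "Re (d$2)"] zero_less_power2[of "Im (d$4)"]
    by linarith
  then have N: "?N \<noteq> 0" by (simp add: complex_eq_iff)
  show ?thesis
  proof (cases "d$1 \<noteq> 0 \<or> d$3 \<noteq> 0")
    case True
    let ?c = "Complex (Re (d$3)) (Im (d$1))"
    have c: "?c \<noteq> 0" using True P1 by (auto simp: complex_eq_iff)
    let ?K = "Xp 0 d$1$2 * Xp 0 d$2$3 * Xp 0 d$3$1 + Xp 0 d$1$3 * Xp 0 d$2$1 * Xp 0 d$3$2
      - Xp 0 d$1$3 * Xp 0 d$2$2 * Xp 0 d$3$1 - Xp 0 d$1$1 * Xp 0 d$2$3 * Xp 0 d$3$2"
    have "finite {w. ?c * ?N + w * ?K = 0}" using c N by (intro finite_lin) simp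
    moreover have "rank (Xp t d) = 3" if "(exp (\<i> * complex_of_real t))^2 \<notin> {w. ?c * ?N + w * ?K = 0}" for t
      using that by (intro rank_minor[of _ 1 2 3]) (simp add: det123)
    ultimately show ?thesis by blast
  next
    case False2: False
    let ?c = "Complex (- Re (d$4)) (Im (d$2))"
    have c: "?c \<noteq> 0" using False False2 P1 by (auto simp: complex_eq_iff)
    let ?K = "Xp 0 d$1$2 * Xp 0 d$2$4 * Xp 0 d$3$1 + Xp 0 d$1$4 * Xp 0 d$2$1 * Xp 0 d$3$2
      - Xp 0 d$1$4 * Xp 0 d$2$2 * Xp 0 d$3$1 - Xp 0 d$1$1 * Xp 0 d$2$4 * Xp 0 d$3$2"
    have "finite {w. ?c * ?N + w * ?K = 0}" using c N by (intro finite_lin) simp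
    moreover have "rank (Xp t d) = 3" if "(exp (\<i> * complex_of_real t))^2 \<notin> {w. ?c * ?N + w * ?K = 0}" for t
      using that by (intro rank_minor[of _ 1 2 4]) (simp add: det124)
    ultimately show ?thesis by blast
  qed
qed

lemma finF: "finite A \<Longrightarrow> finite {x::complex^6. \<forall>i. x$i \<in> A}"
proof -
  assume A: "finite A"
  have "vec_nth ` {x::complex^6. \<forall>i. x$i \<in> A} \<subseteq> PiE UNIV (\<lambda>_. A)"
    by (auto simp: PiE_def extensional_def)
  moreover have "finite (PiE (UNIV::6 set) (\<lambda>_. A))" using A by (intro finite_PiE) auto
  ultimately have "finite (vec_nth ` {x::complex^6. \<forall>i. x$i \<in> A})" by (rule finite_subset)
  moreover have "inj_on vec_nth {x::complex^6. \<forall>i. x$i \<in> A}"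
    by (auto simp: inj_on_def vec_eq_iff)
  ultimately show ?thesis by (rule finite_imageD)
qed

lemma inj_g: "inj_on (\<lambda>t. (exp (\<i> * complex_of_real t))^2) {0..<pi}"
proof (rule inj_onI)
  fix s t assume s: "s \<in> {0..<pi}" and t: "t \<in> {0..<pi}"
    and eq: "(exp (\<i> * complex_of_real s))^2 = (exp (\<i> * complex_of_real t))^2"
  have e: "exp (of_nat 2 * (\<i> * complex_of_real s)) = exp (of_nat 2 * (\<i> * complex_of_real t))"
    using eq by (simp only: exp_of_nat_mult)
  have a: "\<bar>Im (of_nat 2 * (\<i> * complex_of_real s)) - Im (of_nat 2 * (\<i> * complex_of_real t))\<bar> < 2 * pi"
    using s t by (simp add: abs_less_iff)
  have "of_nat 2 * (\<i> * complex_of_real s) = of_nat 2 * (\<i> * complex_of_real t)"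
    by (rule exp_complex_eqI[OF a e])
  then show "s = t" by simp
qed


theorem lemma1:
  fixes L :: nat and S :: "nat \<Rightarrow> complex set"
  assumes "\<forall>l\<in>{1..L}. finite (S l) \<and> nonzero_cpd (S l)"
  shows "\<exists>\<theta>\<in>{0..2*pi}. \<forall>l\<in>{1..L}. \<forall>x y :: complex^6.
           (\<forall>i. x$i \<in> S l) \<and> (\<forall>i. y$i \<in> S l) \<and> x \<noteq> y \<longrightarrow>
           rank (Xp \<theta> x - Xp \<theta> y) = 3"
proof -
  define F where "F l = {x::complex^6. \<forall>i. x$i \<in> S l}" for l
  define D where "D = {d. d \<noteq> 0 \<and> (\<forall>i. Re (d$i) = 0 \<longleftrightarrow> Im (d$i) = 0) \<and>
      (\<exists>l\<in>{1..L}. \<exists>x\<in>F l. \<exists>y\<in>F l. d = x - y)}"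
  have "D \<subseteq> (\<Union>l\<in>{1..L}. (\<lambda>(x,y). x - y) ` (F l \<times> F l))"
  proof
    fix d assume "d \<in> D"
    then have "\<exists>l\<in>{1..L}. \<exists>x\<in>F l. \<exists>y\<in>F l. d = x - y" by (simp add: D_def)
    then obtain l x y where l: "l\<in>{1..L}" and xy: "x\<in>F l" "y\<in>F l" and d: "d = x - y"
      by blast
    have "(x,y) \<in> F l \<times> F l" using xy by simp
    then have "(\<lambda>(x,y). x - y) (x,y) \<in> (\<lambda>(x,y). x - y) ` (F l \<times> F l)" by (rule imageI)
    then have "d \<in> (\<lambda>(x,y). x - y) ` (F l \<times> F l)" using d by simp
    with l show "d \<in> (\<Union>l\<in>{1..L}. (\<lambda>(x,y). x - y) ` (F l \<times> F l))" by (rule UN_I)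
  qed
  moreover have "finite (\<Union>l\<in>{1..L}. (\<lambda>(x,y). x - y) ` (F l \<times> F l))"
  proof (intro finite_UN_I finite_imageI finite_cartesian_product)
    fix l assume "l \<in> {1..L}"
    then have "finite (S l)" using assms by blast
    then show "finite (F l)" unfolding F_def by (rule finF)
    then show "finite (F l)" .
  qed simp
  ultimately have finD: "finite D" by (rule finite_subset)
  have "\<forall>d\<in>D. \<exists>W. finite W \<and> (\<forall>t. (exp (\<i> * complex_of_real t))^2 \<notin> W \<longrightarrow> rank (Xp t d) = 3)"
  proof
    fix d assume "d \<in> D"
    then have "d \<noteq> 0" "\<forall>i. Re (d$i) = 0 \<longleftrightarrow> Im (d$i) = 0" unfolding D_def by blast+
    then show "\<exists>W. finite W \<and> (\<forall>t. (exp (\<i> * complex_of_real t))^2 \<notin> W \<longrightarrow> rank (Xp t d) = 3)"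
      by (rule core)
  qed
  from bchoice[OF this] obtain Wf where Wf: "\<forall>d\<in>D. finite (Wf d) \<and> (\<forall>t. (exp (\<i> * complex_of_real t))^2 \<notin> Wf d \<longrightarrow> rank (Xp t d) = 3)"
    by blast
  define WT where "WT = \<Union>(Wf ` D)"
  have finWT: "finite WT" unfolding WT_def
    by (rule finite_UN_I[OF finD]) (use Wf in blast)
  define g where "g t = (exp (\<i> * complex_of_real t))^2" for t :: real
  have finB: "finite (g -` WT \<inter> {0..<pi})"
    using finWT inj_g unfolding g_def by (rule finite_vimage_IntI)
  have inf: "infinite {0..<pi}" by (rule infinite_Ico) simp
  have "{0..<pi} - (g -` WT \<inter> {0..<pi}) \<noteq> {}"
  proof
    assume "{0..<pi} - (g -` WT \<inter> {0..<pi}) = {}"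
    then have "{0..<pi} \<subseteq> g -` WT \<inter> {0..<pi}" by blast
    with finB have "finite {0..<pi::real}" by (rule finite_subset[rotated])
    with inf show False by contradiction
  qed
  then obtain \<theta> where th: "\<theta> \<in> {0..<pi} - (g -` WT \<inter> {0..<pi})" by blast
  have th0: "\<theta> \<in> {0..2*pi}" using th pi_gt_zero by simp
  have main: "\<forall>l\<in>{1..L}. \<forall>x y :: complex^6.
           (\<forall>i. x$i \<in> S l) \<and> (\<forall>i. y$i \<in> S l) \<and> x \<noteq> y \<longrightarrow>
           rank (Xp \<theta> x - Xp \<theta> y) = 3"
  proof (intro ballI allI impI)
    fix l x y assume l: "l \<in> {1..L}"
      and xy: "(\<forall>i. x$i \<in> S l) \<and> (\<forall>i. y$i \<in> S l) \<and> (x::complex^6) \<noteq> y"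
    have cpd: "nonzero_cpd (S l)" using assms l by blast
    have P: "\<forall>i. Re ((x - y)$i) = 0 \<longleftrightarrow> Im ((x - y)$i) = 0"
    proof
      fix i
      show "Re ((x - y)$i) = 0 \<longleftrightarrow> Im ((x - y)$i) = 0"
      proof (cases "x$i = y$i")
        case True then show ?thesis by simp
      next
        case False
        with cpd xy have "\<bar>Re (x$i) - Re (y$i)\<bar> * \<bar>Im (x$i) - Im (y$i)\<bar> \<noteq> 0"
          unfolding nonzero_cpd_def by blast
        then show ?thesis by simp
      qed
    qed
    have xF: "x \<in> F l" "y \<in> F l" unfolding F_def using xy by auto
    have "x - y \<noteq> 0" using xy by simp
    then have dD: "x - y \<in> D" unfolding D_def using xF P l by blast
    have "Wf (x - y) \<subseteq> WT" unfolding WT_def using dD by blast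
    then have "g \<theta> \<notin> Wf (x - y)" using th by blast
    moreover have "\<forall>t. (exp (\<i> * complex_of_real t))^2 \<notin> Wf (x - y) \<longrightarrow> rank (Xp t (x - y)) = 3"
      using Wf dD by blast
    ultimately have "rank (Xp \<theta> (x - y)) = 3" unfolding g_def by blast
    then show "rank (Xp \<theta> x - Xp \<theta> y) = 3" by (simp add: Xp_diff)
  qed
  from th0 main show ?thesis by (rule bexI[rotated])
qed
end
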